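(* Let $(\Sigma_+,\Sigma_-,N_1,N_2,N_3)$ be a solution of the Wainwright–Hsu system satisfying the constraint, with $N_1=0$, $N_2,N_3>0$, such that $N_2=N_3$ and $\Sigma_-=0$ never hold simultaneously. Then $\lim_{\tau\to\infty}\Sigma_+=-1$, $\lim_{\tau\to\infty}\Sigma_-=0$ and $\lim_{\tau\to\infty}(N_2-N_3)=0$.
   Context: Wainwright–Hsu system: for functions $N_1,N_2,N_3,\Sigma_+,\Sigma_-$ of $\tau\in\mathbb{R}$ (prime denotes $d/d\tau$), $N_1'=(q-4\Sigma_+)N_1$, $N_2'=(q+2\Sigma_++2\sqrt3\Sigma_-)N_2$, $N_3'=(q+2\Sigma_+-2\sqrt3\Sigma_-)N_3$, $\Sigma_+'=-(2-q)\Sigma_+-3S_+$, $\Sigma_-'=-(2-q)\Sigma_--3S_-$, where $q=2(\Sigma_+^2+\Sigma_-^2)$, $S_+=\frac12[(N_2-N_3)^2-N_1(2N_1-N_2-N_3)]$, $S_-=\frac{\sqrt3}{2}(N_3-N_2)(N_1-N_2-N_3)$, together with the constraint $\Sigma_+^2+\Sigma_-^2+\frac34[N_1^2+N_2^2+N_3^2-2(N_1N_2+N_2N_3+N_1N_3)]=1$. Solutions exist for all $\tau\in\mathbb{R}$. *)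

theory Defs
  imports "HOL-Analysis.Analysis"
begin

definition wh_q :: "real \<Rightarrow> real \<Rightarrow> real" where
  "wh_q sp sm = 2 * (sp^2 + sm^2)"

definition wh_Splus :: "real \<Rightarrow> real \<Rightarrow> real \<Rightarrow> real" where
  "wh_Splus n1 n2 n3 = (1/2) * ((n2 - n3)^2 - n1 * (2*n1 - n2 - n3))"

definition wh_Sminus :: "real \<Rightarrow> real \<Rightarrow> real \<Rightarrow> real" where
  "wh_Sminus n1 n2 n3 = (sqrt 3 / 2) * (n3 - n2) * (n1 - n2 - n3)"

definition wh_solution ::
  "(real \<Rightarrow> real) \<Rightarrow> (real \<Rightarrow> real) \<Rightarrow> (real \<Rightarrow> real) \<Rightarrow> (real \<Rightarrow> real) \<Rightarrow> (real \<Rightarrow> real) \<Rightarrow> bool"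
where
  "wh_solution N1 N2 N3 Sp Sm \<longleftrightarrow>
    (\<forall>t. (N1 has_real_derivative ((wh_q (Sp t) (Sm t) - 4 * Sp t) * N1 t)) (at t)
       \<and> (N2 has_real_derivative ((wh_q (Sp t) (Sm t) + 2 * Sp t + 2 * sqrt 3 * Sm t) * N2 t)) (at t)
       \<and> (N3 has_real_derivative ((wh_q (Sp t) (Sm t) + 2 * Sp t - 2 * sqrt 3 * Sm t) * N3 t)) (at t)
       \<and> (Sp has_real_derivative (- (2 - wh_q (Sp t) (Sm t)) * Sp t - 3 * wh_Splus (N1 t) (N2 t) (N3 t))) (at t)
       \<and> (Sm has_real_derivative (- (2 - wh_q (Sp t) (Sm t)) * Sm t - 3 * wh_Sminus (N1 t) (N2 t) (N3 t))) (at t)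
       \<and> (Sp t)^2 + (Sm t)^2 + (3/4) * ((N1 t)^2 + (N2 t)^2 + (N3 t)^2
            - 2 * (N1 t * N2 t + N2 t * N3 t + N1 t * N3 t)) = 1)"

end

theory Submission
  imports Defs
begin

lemma deriv_lower:
  fixes f f' :: "real \<Rightarrow> real"
  assumes d: "\<And>t. (f has_real_derivative f' t) (at t)"
    and c: "\<And>t. t \<ge> T \<Longrightarrow> f' t \<ge> c" and T: "T \<le> t"
  shows "f t \<ge> f T + c * (t - T)"
proof (cases "T = t")
  case True then show ?thesis by simp
next
  case False
  then have "T < t" using T by simp
  from MVT2[OF this, of f f'] d obtain z where z: "T < z" "z < t" "f t - f T = (t - T) * f' z"
    by blast
  have "c * (t - T) \<le> f' z * (t - T)" using c[of z] z \<open>T < t\<close> by (intro mult_right_mono) auto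
  then show ?thesis using z(3) by (simp add: mult.commute)
qed

lemma Dgen:
  fixes w A B C E :: real
  assumes "w \<noteq> 0"
  shows "(A * w - B * (w * w) + C * (w * w) - E) / (w * w) = A / w - B + C - E / w^2"
  using assms by (simp add: field_simps power2_eq_square)

lemma lin5:
  fixes HD A X C D E n ab :: real
  assumes "HD = A - 9/4 * X + C - D - E" "9/2 * X \<le> C" "D \<le> 12 / n" "E \<le> 6 / n"
    "3 * ab \<le> A + 9/4 * X" "18 / n \<le> ab" "12 / n + 6 / n = 18 / n" "0 \<le> ab"
  shows "ab \<le> HD"
  using assms by linarith

lemma Hder_alg:
  fixes p m u v a s :: real
  assumes nz: "u + v \<noteq> 0" and s3: "s * s = 3"
  shows "(((0 * m + (- (3 / 2) * (u - v)^2 * m - 3 * s / 2 * (u - v) * (u + v)) * (s / 2)) * (u - v)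
      + ((2 * (p^2 + m^2) + 2 * p + 2 * s * m) * u - (2 * (p^2 + m^2) + 2 * p - 2 * s * m) * v) * (s / 2 * m)) * (u + v)
      - s / 2 * m * (u - v) * ((2 * (p^2 + m^2) + 2 * p + 2 * s * m) * u + (2 * (p^2 + m^2) + 2 * p - 2 * s * m) * v))
      / ((u + v) * (u + v)) - (0 * (1 + p) + (0 + - (3 / 2) * (u - v)^2 * (1 + p)) * (3 / a))
   = 3 * m^2 - 9/4 * (u - v)^2 + 9 / (2 * a) * (u - v)^2 * (1 + p)
       - (3 * s / 4) * (u - v)^3 * m / (u + v) - 3 * m^2 * (u - v)^2 / (u + v)^2"
proof -
  have "((0 * m + (- (3 / 2) * (u - v)^2 * m - 3 * s / 2 * (u - v) * (u + v)) * (s / 2)) * (u - v)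
      + ((2 * (p^2 + m^2) + 2 * p + 2 * s * m) * u - (2 * (p^2 + m^2) + 2 * p - 2 * s * m) * v) * (s / 2 * m)) * (u + v)
      - s / 2 * m * (u - v) * ((2 * (p^2 + m^2) + 2 * p + 2 * s * m) * u + (2 * (p^2 + m^2) + 2 * p - 2 * s * m) * v)
    = -(3 * s / 4) * (u - v)^3 * m * (u + v) - 9/4 * (u - v)^2 * ((u + v) * (u + v)) + 3 * m^2 * ((u + v) * (u + v))
      - 3 * m^2 * (u - v)^2 + (s * s - 3) * (- 3/4 * (u - v)^2 * ((u + v) * (u + v)) + m^2 * ((u + v) * (u + v)) - m^2 * (u - v)^2)" (is "?L = _")
    by algebra
  also have "\<dots> = -(3 * s / 4) * (u - v)^3 * m * (u + v) - 9/4 * (u - v)^2 * ((u + v) * (u + v)) + 3 * m^2 * ((u + v) * (u + v))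
      - 3 * m^2 * (u - v)^2" (is "_ = ?R") using s3 by simp
  finally have R: "?L = ?R" .
  have D: "(-(3 * s / 4) * (u - v)^3 * m * (u + v) - 9/4 * (u - v)^2 * ((u + v) * (u + v)) + 3 * m^2 * ((u + v) * (u + v))
      - 3 * m^2 * (u - v)^2) / ((u + v) * (u + v))
    = - (3 * s / 4) * (u - v)^3 * m / (u + v) - 9/4 * (u - v)^2 + 3 * m^2 - 3 * m^2 * (u - v)^2 / (u + v)^2"
    using Dgen[OF nz, of "-(3 * s / 4) * (u - v)^3 * m" "9/4 * (u - v)^2" "3 * m^2" "3 * m^2 * (u - v)^2"]
    by (simp add: mult.assoc)
  show ?thesis unfolding R D by simp
qed

theorem mainTheorem8:
  fixes N1 N2 N3 Sp Sm :: "real \<Rightarrow> real"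
  assumes "wh_solution N1 N2 N3 Sp Sm"
    and "\<And>t. N1 t = 0"
    and "\<And>t. N2 t > 0"
    and "\<And>t. N3 t > 0"
    and "\<And>t. \<not> (N2 t = N3 t \<and> Sm t = 0)"
  shows "(Sp \<longlongrightarrow> -1) at_top \<and> (Sm \<longlongrightarrow> 0) at_top
         \<and> ((\<lambda>t. N2 t - N3 t) \<longlongrightarrow> 0) at_top"
proof -
  define s where "s = sqrt 3"
  have s3: "s * s = 3" and s0: "s > 0" and s2: "s < 2"
    unfolding s_def by (auto simp: real_less_lsqrt)
  note sol = assms(1)[unfolded wh_solution_def wh_q_def wh_Splus_def wh_Sminus_def assms(2), folded s_def]
  have con: "Sp t ^ 2 + Sm t ^ 2 + 3/4 * (N2 t - N3 t)^2 = 1" for t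
    using sol by (auto simp: power2_eq_square algebra_simps)
  have q: "2 - 2 * (Sp t ^ 2 + Sm t ^ 2) = 3/2 * (N2 t - N3 t)^2" for t
    using con[of t] by algebra
  have dN2: "(N2 has_real_derivative ((2 * (Sp t ^ 2 + Sm t ^ 2) + 2 * Sp t + 2 * s * Sm t) * N2 t)) (at t)" for t
    using sol by auto
  have dN3: "(N3 has_real_derivative ((2 * (Sp t ^ 2 + Sm t ^ 2) + 2 * Sp t - 2 * s * Sm t) * N3 t)) (at t)" for t
    using sol by auto
  have dSp: "(Sp has_real_derivative (-(3/2) * (N2 t - N3 t)^2 * (1 + Sp t))) (at t)" for t
  proof -
    have e: "- (2 - 2 * (Sp t ^ 2 + Sm t ^ 2)) * Sp t - 3 * (1 / 2 * ((N2 t - N3 t)^2 - 0 * (2 * 0 - N2 t - N3 t)))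
       = -(3/2) * (N2 t - N3 t)^2 * (1 + Sp t)"
      unfolding q[of t] by (simp add: algebra_simps)
    show ?thesis using sol e by metis
  qed
  have dSm: "(Sm has_real_derivative (-(3/2) * (N2 t - N3 t)^2 * Sm t - (3 * s / 2) * (N2 t - N3 t) * (N2 t + N3 t))) (at t)" for t
  proof -
    have e: "- (2 - 2 * (Sp t ^ 2 + Sm t ^ 2)) * Sm t - 3 * (s / 2 * (N3 t - N2 t) * (0 - N2 t - N3 t))
       = -(3/2) * (N2 t - N3 t)^2 * Sm t - (3 * s / 2) * (N2 t - N3 t) * (N2 t + N3 t)"
      unfolding q[of t] by (simp add: algebra_simps power2_eq_square)
    show ?thesis using sol e by metis
  qed
  have sq1: "Sp t ^ 2 \<le> 1 \<and> Sm t ^ 2 \<le> 1 \<and> (N2 t - N3 t)^2 \<le> 4/3" for t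
    using con[of t] zero_le_power2[of "Sp t"] zero_le_power2[of "Sm t"] zero_le_power2[of "N2 t - N3 t"]
    by linarith
  have spm: "-1 < Sp t \<and> Sp t < 1" for t
  proof -
    have "\<bar>Sp t\<bar> \<le> 1" using sq1[of t] by (simp add: abs_square_le_1)
    moreover have "Sp t \<noteq> -1 \<and> Sp t \<noteq> 1"
    proof
      show "Sp t \<noteq> -1"
      proof
        assume h: "Sp t = -1"
        then have "Sm t ^ 2 + 3/4 * (N2 t - N3 t)^2 = 0" using con[of t] by simp
        then have "Sm t ^ 2 = 0 \<and> (N2 t - N3 t)^2 = 0" using zero_le_power2[of "Sm t"] zero_le_power2[of "N2 t - N3 t"] by linarith
        then have "Sm t = 0 \<and> N2 t = N3 t" by simp
        then show False using assms(5)[of t] by simp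
      qed
      show "Sp t \<noteq> 1"
      proof
        assume h: "Sp t = 1"
        then have "Sm t ^ 2 + 3/4 * (N2 t - N3 t)^2 = 0" using con[of t] by simp
        then have "Sm t ^ 2 = 0 \<and> (N2 t - N3 t)^2 = 0" using zero_le_power2[of "Sm t"] zero_le_power2[of "N2 t - N3 t"] by linarith
        then have "Sm t = 0 \<and> N2 t = N3 t" by simp
        then show False using assms(5)[of t] by simp
      qed
    qed
    ultimately show ?thesis by auto
  qed
  have absSm: "\<bar>Sm t\<bar> \<le> 1" for t using sq1[of t] by (simp add: abs_square_le_1)
  have absx: "\<bar>N2 t - N3 t\<bar> \<le> 2" for t
  proof -
    have "\<bar>N2 t - N3 t\<bar>^2 \<le> 2^2" using sq1[of t] by simp
    then show ?thesis by (rule power2_le_imp_le) simp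
  qed
  have absxN: "\<bar>N2 t - N3 t\<bar> \<le> N2 t + N3 t" for t using assms(3,4)[of t] by auto
  have dec: "Sp t2 \<le> Sp t1" if "t1 \<le> t2" for t1 t2
  proof -
    have "- Sp t2 \<ge> - Sp t1 + 0 * (t2 - t1)"
    proof (rule deriv_lower[of "\<lambda>t. - Sp t" "\<lambda>t. 3/2 * (N2 t - N3 t)^2 * (1 + Sp t)"])
      show "((\<lambda>t. - Sp t) has_real_derivative 3/2 * (N2 t - N3 t)^2 * (1 + Sp t)) (at t)" for t
        using DERIV_minus[OF dSp[of t]] by simp
      show "0 \<le> 3/2 * (N2 t - N3 t)^2 * (1 + Sp t)" for t using spm[of t] by simp
    qed (use that in auto)
    then show ?thesis by simp
  qed
  have key: "\<exists>t\<ge>0. 1 + Sp t < a" if a0: "a > 0" for a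
  proof (rule ccontr)
    assume "\<not> ?thesis"
    then have ha: "1 + Sp t \<ge> a" if "t \<ge> 0" for t using that by force
    define b where "b = 1 - Sp 0"
    have b0: "b > 0" using spm[of 0] by (simp add: b_def)
    have hb: "1 - Sp t \<ge> b" if "t \<ge> 0" for t using dec[OF that] by (simp add: b_def)
    have hab: "1 - Sp t ^ 2 \<ge> a * b" if "t \<ge> 0" for t
    proof -
      have "a * b \<le> (1 + Sp t) * (1 - Sp t)"
        using ha[OF that] hb[OF that] a0 b0 by (intro mult_mono) auto
      also have "\<dots> = 1 - Sp t ^ 2" by algebra
      finally show ?thesis .
    qed
    define P where "P t = N2 t * N3 t / ((1 + Sp t) * (1 + Sp t))" for t
    have Ppos: "P t > 0" for t using assms(3,4)[of t] spm[of t] by (simp add: P_def)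
    have nz: "1 + Sp t \<noteq> 0" for t using spm[of t] by simp
    have xx: "(N2 t - N3 t)^2 = 4/3 * (1 - Sp t ^ 2 - Sm t ^ 2)" for t using con[of t] by algebra
    have dP: "(P has_real_derivative (4 * (1 + Sp t) * P t)) (at t)" for t
    proof -
      have num: "((2 * ((Sp t)\<^sup>2 + (Sm t)\<^sup>2) + 2 * Sp t + 2 * s * Sm t) * N2 t * N3 t +
       (2 * ((Sp t)\<^sup>2 + (Sm t)\<^sup>2) + 2 * Sp t - 2 * s * Sm t) * N3 t * N2 t) *
      ((1 + Sp t) * (1 + Sp t)) -
      N2 t * N3 t *
      ((0 + - (3 / 2) * (N2 t - N3 t)\<^sup>2 * (1 + Sp t)) * (1 + Sp t) +
       (0 + - (3 / 2) * (N2 t - N3 t)\<^sup>2 * (1 + Sp t)) * (1 + Sp t))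
       = 4 * (1 + Sp t) * (N2 t * N3 t) * ((1 + Sp t) * (1 + Sp t))"
        unfolding xx[of t] by algebra
      have "((\<lambda>t. N2 t * N3 t / ((1 + Sp t) * (1 + Sp t))) has_real_derivative (4 * (1 + Sp t) * P t)) (at t)"
        apply (rule derivative_eq_intros dN2 dN3 dSp refl)+
        using nz apply simp
        apply (subst num)
        using nz[of t] by (simp add: P_def)
      then show ?thesis unfolding P_def[abs_def] .
    qed
    have P_inc: "P t \<ge> P 0" if "t \<ge> 0" for t
    proof -
      have "P t \<ge> P 0 + 0 * (t - 0)"
      proof (rule deriv_lower[where f'="\<lambda>t. 4 * (1 + Sp t) * P t"])
        show "(P has_real_derivative 4 * (1 + Sp u) * P u) (at u)" for u by (rule dP)
        show "0 \<le> 4 * (1 + Sp u) * P u" for u using spm[of u] Ppos[of u] by simp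
      qed (use that in auto)
      then show ?thesis by simp
    qed
    have P_lin: "P t \<ge> P 0 + 4 * a * P 0 * (t - 0)" if "t \<ge> 0" for t
    proof (rule deriv_lower[where f'="\<lambda>t. 4 * (1 + Sp t) * P t"])
      show "(P has_real_derivative 4 * (1 + Sp u) * P u) (at u)" for u by (rule dP)
      show "4 * a * P 0 \<le> 4 * (1 + Sp u) * P u" if "u \<ge> 0" for u
      proof -
        have "a * P 0 \<le> (1 + Sp u) * P u"
          using ha[OF that] P_inc[OF that] a0 Ppos[of 0] by (intro mult_mono) auto
        then show ?thesis by (simp add: algebra_simps)
      qed
    qed (use that in auto)
    define N where "N t = N2 t + N3 t" for t
    have Npos: "N t > 0" for t using assms(3,4)[of t] by (simp add: N_def)
    have Nsq: "N t ^ 2 \<ge> 16 * a^3 * P 0 * t" if "t \<ge> 0" for t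
    proof -
      have e1: "N t ^ 2 = 4 * (N2 t * N3 t) + (N2 t - N3 t)^2" by (simp add: N_def power2_eq_square algebra_simps)
      have e2: "N2 t * N3 t = P t * ((1 + Sp t) * (1 + Sp t))" using nz[of t] by (simp add: P_def)
      have e3: "a * a \<le> (1 + Sp t) * (1 + Sp t)" using ha[OF that] a0 by (intro mult_mono) auto
      have "P t * (a * a) \<le> P t * ((1 + Sp t) * (1 + Sp t))"
        using e3 Ppos[of t] by (intro mult_left_mono) auto
      moreover have "4 * a * P 0 * t * (a * a) \<le> P t * (a * a)"
        using P_lin[OF that] Ppos[of 0] that a0 by (intro mult_right_mono) auto
      moreover have "4 * a * P 0 * t * (a * a) = 4 * a^3 * P 0 * t" by (simp add: power3_eq_cube)
      ultimately show ?thesis using e1 e2 zero_le_power2[of "N2 t - N3 t"] by linarith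
    qed
    define M where "M = 20 / (a * b)"
    have M0: "M > 0" using a0 b0 by (simp add: M_def)
    define T where "T = M^2 / (16 * a^3 * P 0)"
    have T0: "T \<ge> 0" using a0 Ppos[of 0] by (simp add: T_def)
    have NM: "N t \<ge> M" if "t \<ge> T" for t
    proof -
      have "M^2 = 16 * a^3 * P 0 * T" using a0 Ppos[of 0] by (simp add: T_def)
      also have "\<dots> \<le> 16 * a^3 * P 0 * t" using that a0 Ppos[of 0] by (intro mult_left_mono) auto
      also have "\<dots> \<le> N t ^ 2" using Nsq[of t] that T0 by simp
      finally show ?thesis using Npos[of t] power2_le_imp_le[of M "N t"] by auto
    qed
    define H where "H t = s / 2 * Sm t * (N2 t - N3 t) / N t - 3 / a * (1 + Sp t)" for t
    define HD where "HD t = 3 * Sm t ^ 2 - 9/4 * (N2 t - N3 t)^2 + 9 / (2 * a) * (N2 t - N3 t)^2 * (1 + Sp t)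
       - (3 * s / 4) * (N2 t - N3 t)^3 * Sm t / N t - 3 * Sm t ^ 2 * (N2 t - N3 t)^2 / (N t)^2" for t
    have nzN: "N2 t + N3 t \<noteq> 0" for t using Npos[of t] by (simp add: N_def)
    have dH: "(H has_real_derivative HD t) (at t)" for t
    proof -
      have "((\<lambda>t. s / 2 * Sm t * (N2 t - N3 t) / (N2 t + N3 t) - 3 / a * (1 + Sp t)) has_real_derivative HD t) (at t)"
        apply (rule derivative_eq_intros dN2 dN3 dSp dSm refl nzN)+
        unfolding HD_def N_def by (rule Hder_alg[OF nzN s3])
      then show ?thesis unfolding H_def[abs_def] N_def[abs_def] .
    qed
    have HDlow: "HD t \<ge> a * b" if tT: "t \<ge> T" for t
    proof -
      define x where "x = N2 t - N3 t"
      define n where "n = N t"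
      have n0: "n > 0" using Npos[of t] by (simp add: n_def)
      have t0: "t \<ge> 0" using tT T0 by simp
      have nM: "n \<ge> M" using NM[OF tT] by (simp add: n_def)
      have ax: "\<bar>x\<bar> \<le> 2" using absx[of t] by (simp add: x_def)
      have axn: "\<bar>x\<bar> \<le> n" using absxN[of t] by (simp add: x_def n_def N_def)
      have am: "\<bar>Sm t\<bar> \<le> 1" by (rule absSm)
      have h1: "9 / (2 * a) * x^2 * (1 + Sp t) \<ge> 9/2 * x^2"
      proof -
        have "(1 + Sp t) / a \<ge> 1" using ha[OF t0] a0 by simp
        then have "9/2 * x^2 * 1 \<le> 9/2 * x^2 * ((1 + Sp t) / a)" by (intro mult_left_mono) auto
        also have "\<dots> = 9 / (2 * a) * x^2 * (1 + Sp t)" by (simp add: field_simps)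
        finally show ?thesis by simp
      qed
      have h2: "(3 * s / 4) * x^3 * Sm t / n \<le> 12 / n"
      proof -
        have "\<bar>x\<bar>^3 \<le> 2^3" using ax by (intro power_mono) auto
        then have "\<bar>x\<bar>^3 * \<bar>Sm t\<bar> \<le> 8 * 1" using am by (intro mult_mono) auto
        then have c12: "(3 * s / 4) * (\<bar>x\<bar>^3 * \<bar>Sm t\<bar>) \<le> (3/2) * 8"
          using s0 s2 by (intro mult_mono) auto
        have "(3 * s / 4) * x^3 * Sm t \<le> 12"
        proof -
          have "\<bar>(3 * s / 4) * x^3 * Sm t\<bar> = (3 * s / 4) * (\<bar>x\<bar>^3 * \<bar>Sm t\<bar>)"
            using s0 by (simp add: abs_mult power_abs mult.assoc)
          moreover have "(3 * s / 4) * x^3 * Sm t \<le> \<bar>(3 * s / 4) * x^3 * Sm t\<bar>" by (rule abs_ge_self)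
          ultimately show ?thesis using c12 by linarith
        qed
        then show ?thesis using n0 by (intro divide_right_mono) auto
      qed
      have h3: "3 * Sm t ^ 2 * x^2 / n^2 \<le> 6 / n"
      proof -
        have "x^2 \<le> 2 * n"
        proof -
          have "x^2 = \<bar>x\<bar> * \<bar>x\<bar>" by (simp add: power2_eq_square)
          also have "\<dots> \<le> 2 * n" using ax axn by (intro mult_mono) auto
          finally show ?thesis .
        qed
        moreover have "Sm t ^ 2 \<le> 1" using sq1[of t] by simp
        ultimately have "Sm t ^ 2 * x^2 \<le> 1 * (2 * n)" by (intro mult_mono) auto
        then have "3 * Sm t ^ 2 * x^2 / n^2 \<le> 3 * (2 * n) / n^2"
          using n0 by (intro divide_right_mono) (auto simp: mult.commute)
        also have "\<dots> = 6 / n" using n0 by (simp add: power2_eq_square)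
        finally show ?thesis .
      qed
      have h4: "3 * Sm t ^ 2 + 9/4 * x^2 \<ge> 3 * (a * b)"
        using con[of t] hab[OF t0] unfolding x_def by linarith
      have h5: "18 / n \<le> a * b"
      proof -
        have "18 / n \<le> 18 / M" using nM M0 by (intro divide_left_mono) auto
        also have "\<dots> \<le> 20 / M" using M0 by (intro divide_right_mono) auto
        also have "20 / M = a * b" using a0 b0 by (simp add: M_def)
        finally show ?thesis .
      qed
      have "HD t = 3 * Sm t ^ 2 - 9/4 * x^2 + 9 / (2 * a) * x^2 * (1 + Sp t)
         - (3 * s / 4) * x^3 * Sm t / n - 3 * Sm t ^ 2 * x^2 / n^2"
        by (simp add: HD_def x_def n_def)
      moreover have "12 / n + 6 / n = 18 / n" by (simp add: add_divide_distrib[symmetric])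
      moreover have "0 \<le> a * b" using a0 b0 by simp
      ultimately show ?thesis using lin5[OF _ h1 h2 h3 h4 h5] by blast
    qed
    have Hbd: "\<bar>H t\<bar> \<le> 1 + 6 / a" for t
    proof -
      have n0: "N t > 0" by (rule Npos)
      have "\<bar>Sm t * (N2 t - N3 t)\<bar> \<le> 1 * N t"
        unfolding abs_mult using absSm[of t] absxN[of t] n0 by (intro mult_mono) (auto simp: N_def)
      then have "\<bar>Sm t * (N2 t - N3 t) / N t\<bar> \<le> 1" using n0 by (simp add: divide_le_eq)
      then have "\<bar>s / 2\<bar> * \<bar>Sm t * (N2 t - N3 t) / N t\<bar> \<le> 1 * 1" using s0 s2 by (intro mult_mono) auto
      then have A: "\<bar>s / 2 * Sm t * (N2 t - N3 t) / N t\<bar> \<le> 1" by (simp add: abs_mult mult.assoc)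
      have "3 / a * (1 + Sp t) \<le> 3 / a * 2" using spm[of t] a0 by (intro mult_left_mono) auto
      moreover have "0 \<le> 3 / a * (1 + Sp t)" using spm[of t] a0 by simp
      ultimately have B: "\<bar>3 / a * (1 + Sp t)\<bar> \<le> 6 / a" by simp
      show ?thesis unfolding H_def using A B by linarith
    qed
    define t1 where "t1 = T + (2 + 12 / a) / (a * b) + 1"
    have t1T: "T \<le> t1" using a0 b0 by (simp add: t1_def)
    have "H t1 \<ge> H T + (a * b) * (t1 - T)"
      by (rule deriv_lower[of H HD]) (use dH HDlow t1T in auto)
    moreover have "(a * b) * (t1 - T) = 2 + 12 / a + a * b" using a0 b0 by (simp add: t1_def field_simps)
    moreover have "0 < a * b" using a0 b0 by simp
    moreover have "H t1 \<le> 1 + 6 / a" "- (1 + 6 / a) \<le> H T" using Hbd[of t1] Hbd[of T] by (simp_all add: abs_le_iff)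
    ultimately show False by linarith
  qed
  have lim1: "((\<lambda>t. 1 + Sp t) \<longlongrightarrow> 0) at_top"
  proof (rule order_tendstoI)
    fix e :: real assume "e < 0"
    then show "\<forall>\<^sub>F t in at_top. e < 1 + Sp t" using spm by (auto intro!: always_eventually) (smt (verit) spm)
  next
    fix e :: real assume "0 < e"
    then obtain t0 where t0: "t0 \<ge> 0" "1 + Sp t0 < e" using key by blast
    show "\<forall>\<^sub>F t in at_top. 1 + Sp t < e"
      unfolding eventually_at_top_linorder using t0 dec by (smt (verit))
  qed
  have limSp: "(Sp \<longlongrightarrow> -1) at_top"
    using tendsto_diff[OF lim1 tendsto_const[of 1]] by simp
  have limR: "((\<lambda>t. sqrt (3 * (1 + Sp t))) \<longlongrightarrow> 0) at_top"
    using tendsto_real_sqrt[OF tendsto_mult[OF tendsto_const[of 3] lim1]] by simp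
  have sqb: "Sm t ^ 2 \<le> 3 * (1 + Sp t) \<and> (N2 t - N3 t)^2 \<le> 3 * (1 + Sp t)" for t
  proof -
    have e: "2*(1+Sp t) - (1 - Sp t^2) = (1 + Sp t)^2" by algebra
    have "(1 + Sp t)^2 \<ge> 0" by simp
    then show ?thesis using e con[of t] spm[of t] zero_le_power2[of "Sp t"] zero_le_power2[of "Sm t"] zero_le_power2[of "N2 t - N3 t"] by linarith
  qed
  have limSm: "(Sm \<longlongrightarrow> 0) at_top"
  proof (rule tendsto_0_le[OF limR, of _ 1])
    show "\<forall>\<^sub>F t in at_top. norm (Sm t) \<le> norm (sqrt (3 * (1 + Sp t))) * 1"
    proof (intro always_eventually allI)
      fix t
      have "\<bar>Sm t\<bar> \<le> sqrt (3 * (1 + Sp t))" using real_le_rsqrt[of "\<bar>Sm t\<bar>"] sqb[of t] by simp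
      then show "norm (Sm t) \<le> norm (sqrt (3 * (1 + Sp t))) * 1" by simp
    qed
  qed
  have limx: "((\<lambda>t. N2 t - N3 t) \<longlongrightarrow> 0) at_top"
  proof (rule tendsto_0_le[OF limR, of _ 1])
    show "\<forall>\<^sub>F t in at_top. norm (N2 t - N3 t) \<le> norm (sqrt (3 * (1 + Sp t))) * 1"
    proof (intro always_eventually allI)
      fix t
      have "\<bar>N2 t - N3 t\<bar> \<le> sqrt (3 * (1 + Sp t))" using real_le_rsqrt[of "\<bar>N2 t - N3 t\<bar>"] sqb[of t] by simp
      then show "norm (N2 t - N3 t) \<le> norm (sqrt (3 * (1 + Sp t))) * 1" by simp
    qed
  qed
  show ?thesis using limSp limSm limx by blast
qed

end
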